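(* Let $f\in\mathbb{F}_q[t][X]$ have $X$-degree $n\ge1$, and for $0\le i\le n-1$ let $B_i=\sup\{m\in\mathbb{N}:(m,i)\in N(f)+\{(0,-1)\}\}$. Let $g\in\mathbb{F}_q[t][X]$ be a nonzero polynomial dividing $f$ in $\mathbb{F}_q[t][X]$ and write $\Phi(g):=fg'/g=\sum_{i=0}^{n-1}a_i(t)X^i$. Then for each $i$ with $a_i\neq0$, the set defining $B_i$ is nonempty and $\deg a_i\le B_i$.
   Context: The Newton polygon $N(h)\subset\mathbb{R}^2$ of $h\in\mathbb{F}_q[t,X]$ is the convex hull of all points $(a,b)$ such that the coefficient of $t^aX^b$ in $h$ is nonzero. For $S_1,S_2\subseteq\mathbb{R}^2$, $S_1+S_2=\{s_1+s_2:s_1\in S_1,s_2\in S_2\}$. $g'$ is the derivative with respect to $X$. *)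

theory Defs
  imports "HOL-Analysis.Analysis" "HOL-Computational_Algebra.Polynomial"
begin

text \<open>Bivariate polynomials in F_q[t][X] are modelled as 'a poly poly: the outer
  variable is X, the coefficients are polynomials in t.  The monomial t^a X^b of h
  has coefficient coeff (coeff h b) a.\<close>

definition newton_polygon :: "'a::zero poly poly \<Rightarrow> (real \<times> real) set" where
  "newton_polygon h = convex hull {(real a, real b) | a b. coeff (coeff h b) a \<noteq> 0}"

definition minkowski_sum :: "(real \<times> real) set \<Rightarrow> (real \<times> real) set \<Rightarrow> (real \<times> real) set" where
  "minkowski_sum S1 S2 = {s1 + s2 | s1 s2. s1 \<in> S1 \<and> s2 \<in> S2}"

definition B_set :: "'a::zero poly poly \<Rightarrow> nat \<Rightarrow> nat set" where
  "B_set f i = {m. (real m, real i) \<in> minkowski_sum (newton_polygon f) {(0, -1)}}"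

end

theory Submission
  imports Defs
begin

definition supp :: "'a::zero poly poly \<Rightarrow> (nat \<times> nat) set" where
  "supp p = {(a,b). coeff (coeff p b) a \<noteq> 0}"

definition W :: "real \<times> real \<Rightarrow> nat \<times> nat \<Rightarrow> real" where
  "W w x = fst w * real (fst x) + snd w * real (snd x)"

lemma supp_iff: "(a,b) \<in> supp p \<longleftrightarrow> coeff (coeff p b) a \<noteq> 0"
  by (simp add: supp_def)

lemma finite_supp: "finite (supp p)"
proof -
  have "supp p \<subseteq> (\<Union>b\<in>{..degree p}. {..degree (coeff p b)} \<times> {b})"
  proof
    fix x assume "x \<in> supp p"
    then obtain a b where x: "x = (a,b)" and c: "coeff (coeff p b) a \<noteq> 0"
      by (cases x) (auto simp: supp_def)
    then have "coeff p b \<noteq> 0" by auto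
    then have "b \<le> degree p" by (simp add: le_degree)
    moreover have "a \<le> degree (coeff p b)" using c by (simp add: le_degree)
    ultimately show "x \<in> (\<Union>b\<in>{..degree p}. {..degree (coeff p b)} \<times> {b})" using x by auto
  qed
  then show ?thesis by (rule finite_subset) auto
qed

lemma supp_nonempty: "p \<noteq> 0 \<Longrightarrow> supp p \<noteq> {}"
proof -
  assume "p \<noteq> 0"
  then have "coeff p (degree p) \<noteq> 0" by simp
  then have "coeff (coeff p (degree p)) (degree (coeff p (degree p))) \<noteq> 0" by simp
  then have "(degree (coeff p (degree p)), degree p) \<in> supp p" by (simp add: supp_def)
  then show ?thesis by auto
qed

lemma coeff_coeff_mult:
  "coeff (coeff (p*q) B) A = (\<Sum>j\<le>B. \<Sum>k\<le>A. coeff (coeff p j) k * coeff (coeff q (B - j)) (A - k))"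
  by (simp add: coeff_mult coeff_sum)

lemma supp_mult_split:
  fixes p q :: "'a::comm_ring_1 poly poly"
  assumes "(a,b) \<in> supp (p*q)"
  shows "\<exists>a1 b1 a2 b2. (a1,b1) \<in> supp p \<and> (a2,b2) \<in> supp q \<and> a = a1 + a2 \<and> b = b1 + b2"
proof -
  have "(\<Sum>j\<le>b. \<Sum>k\<le>a. coeff (coeff p j) k * coeff (coeff q (b - j)) (a - k)) \<noteq> 0"
    using assms by (simp add: supp_iff coeff_coeff_mult)
  then obtain j where j: "j \<le> b" and "(\<Sum>k\<le>a. coeff (coeff p j) k * coeff (coeff q (b - j)) (a - k)) \<noteq> 0"
    by (meson atMost_iff sum.not_neutral_contains_not_neutral)
  then obtain k where k: "k \<le> a" and "coeff (coeff p j) k * coeff (coeff q (b - j)) (a - k) \<noteq> 0"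
    by (meson atMost_iff sum.not_neutral_contains_not_neutral)
  then have "(k,j) \<in> supp p" "(a-k, b-j) \<in> supp q" by (auto simp: supp_iff)
  then show ?thesis using j k by (intro exI[of _ k] exI[of _ j] exI[of _ "a-k"] exI[of _ "b-j"]) auto
qed

lemma coeff_of_nat_mult: "coeff (of_nat n * r) a = of_nat n * coeff r a"
  by (induction n) (auto simp: algebra_simps)

lemma supp_pderiv:
  fixes p :: "'a::idom poly poly"
  assumes "(a,b) \<in> supp (pderiv p)"
  shows "(a, Suc b) \<in> supp p"
proof -
  have "coeff (of_nat (Suc b) * coeff p (Suc b)) a \<noteq> 0"
    using assms by (metis supp_iff coeff_pderiv)
  moreover have "coeff (of_nat (Suc b) * coeff p (Suc b)) a = of_nat (Suc b) * coeff (coeff p (Suc b)) a"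
    by (rule coeff_of_nat_mult)
  ultimately have "coeff (coeff p (Suc b)) a \<noteq> 0" by auto
  then show ?thesis by (simp add: supp_iff)
qed

lemma exists_max:
  assumes "finite S" "S \<noteq> {}"
  shows "\<exists>x0\<in>S. (\<forall>x\<in>S. W w x \<le> W w x0) \<and>
     (\<forall>x\<in>S. W w x = W w x0 \<longrightarrow> snd x < snd x0 \<or> (snd x = snd x0 \<and> fst x \<le> fst x0))"
proof -
  define M where "M = Max (W w ` S)"
  define Sp where "Sp = {x\<in>S. W w x = M}"
  have M: "\<forall>x\<in>S. W w x \<le> M" using assms by (auto simp: M_def)
  have "M \<in> W w ` S" using assms by (simp add: M_def)
  then have Spne: "Sp \<noteq> {}" by (auto simp: Sp_def)
  have Spf: "finite Sp" using assms by (auto simp: Sp_def)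
  define b0 where "b0 = Max (snd ` Sp)"
  have b0: "b0 \<in> snd ` Sp" "\<forall>x\<in>Sp. snd x \<le> b0" using Spne Spf by (auto simp: b0_def)
  define T where "T = {a. (a,b0) \<in> Sp}"
  have Tne: "T \<noteq> {}" using b0 by (force simp: T_def)
  have "T \<subseteq> fst ` Sp" by (force simp: T_def)
  then have Tf: "finite T" using Spf finite_subset by blast
  define a0 where "a0 = Max T"
  have a0: "a0 \<in> T" "\<forall>a\<in>T. a \<le> a0" using Tne Tf by (auto simp: a0_def)
  have x0: "(a0,b0) \<in> Sp" using a0 by (simp add: T_def)
  show ?thesis
  proof (rule bexI[of _ "(a0,b0)"])
    show "(a0,b0) \<in> S" using x0 by (simp add: Sp_def)
    have "W w (a0,b0) = M" using x0 by (simp add: Sp_def)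
    moreover have "snd x < b0 \<or> (snd x = b0 \<and> fst x \<le> a0)" if "x \<in> Sp" for x
    proof -
      have "snd x \<le> b0" using b0 that by auto
      moreover have "snd x = b0 \<Longrightarrow> fst x \<le> a0" using a0 that by (cases x) (auto simp: T_def)
      ultimately show ?thesis by auto
    qed
    ultimately show "(\<forall>x\<in>S. W w x \<le> W w (a0,b0)) \<and>
     (\<forall>x\<in>S. W w x = W w (a0,b0) \<longrightarrow> snd x < snd (a0,b0) \<or> (snd x = snd (a0,b0) \<and> fst x \<le> fst (a0,b0)))"
      using M by (auto simp: Sp_def)
  qed
qed

lemma double_sum_single:
  fixes A B j0 k0 :: nat
  assumes "\<forall>j\<le>B. \<forall>k\<le>A. (j,k) \<noteq> (j0,k0) \<longrightarrow> F j k = 0" "j0 \<le> B" "k0 \<le> A"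
  shows "(\<Sum>j\<le>B. \<Sum>k\<le>A. F j k) = (F j0 k0 :: 'b::comm_monoid_add)"
proof -
  have "(\<Sum>k\<le>A. F j k) = (if j = j0 then F j0 k0 else 0)" if "j \<le> B" for j
  proof (cases "j = j0")
    case True
    have "(\<Sum>k\<le>A. F j k) = (\<Sum>k\<le>A. if k = k0 then F j0 k0 else 0)"
      using assms(1) that True by (intro sum.cong refl) auto
    also have "\<dots> = F j0 k0" using assms(3) by (subst sum.delta) auto
    finally show ?thesis using True by simp
  next
    case False
    then show ?thesis using assms(1) that by (auto intro!: sum.neutral)
  qed
  then have "(\<Sum>j\<le>B. \<Sum>k\<le>A. F j k) = (\<Sum>j\<le>B. if j = j0 then F j0 k0 else 0)"
    by (intro sum.cong refl) auto
  also have "\<dots> = F j0 k0" using assms(2) by simp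
  finally show ?thesis .
qed


lemma W_add: "W w (a1 + a2, b1 + b2) = W w (a1,b1) + W w (a2,b2)"
  by (simp add: W_def algebra_simps)

lemma supp_mult_max:
  fixes p q :: "'a::idom poly poly"
  assumes "p \<noteq> 0" "q \<noteq> 0"
  shows "\<exists>x\<in>supp p. \<exists>y\<in>supp q. (fst x + fst y, snd x + snd y) \<in> supp (p*q) \<and>
     (\<forall>x'\<in>supp p. W w x' \<le> W w x) \<and> (\<forall>y'\<in>supp q. W w y' \<le> W w y)"
proof -
  obtain x0 where x0: "x0 \<in> supp p" "\<forall>x\<in>supp p. W w x \<le> W w x0"
    "\<forall>x\<in>supp p. W w x = W w x0 \<longrightarrow> snd x < snd x0 \<or> (snd x = snd x0 \<and> fst x \<le> fst x0)"
    using exists_max[OF finite_supp supp_nonempty[OF assms(1)]] by blast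
  obtain y0 where y0: "y0 \<in> supp q" "\<forall>x\<in>supp q. W w x \<le> W w y0"
    "\<forall>x\<in>supp q. W w x = W w y0 \<longrightarrow> snd x < snd y0 \<or> (snd x = snd y0 \<and> fst x \<le> fst y0)"
    using exists_max[OF finite_supp supp_nonempty[OF assms(2)]] by blast
  obtain a0 b0 where ab0: "x0 = (a0,b0)" by (cases x0)
  obtain c0 d0 where cd0: "y0 = (c0,d0)" by (cases y0)
  define A where "A = a0 + c0"
  define B where "B = b0 + d0"
  have key: "j = b0 \<and> k = a0"
    if "(k,j) \<in> supp p" "(A - k, B - j) \<in> supp q" "j \<le> B" "k \<le> A" for j k
  proof -
    have W1: "W w (k,j) \<le> W w x0" using x0(2) that(1) by blast
    have W2: "W w (A-k,B-j) \<le> W w y0" using y0(2) that(2) by blast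
    have "W w (k + (A-k), j + (B-j)) = W w (a0 + c0, b0 + d0)"
      using that(3,4) by (simp add: A_def B_def)
    then have "W w (k,j) + W w (A-k,B-j) = W w x0 + W w y0"
      by (simp only: W_add ab0 cd0)
    then have e1: "W w (k,j) = W w x0" and e2: "W w (A-k,B-j) = W w y0" using W1 W2 by linarith+
    have l1: "j < b0 \<or> (j = b0 \<and> k \<le> a0)" using x0(3)[rule_format, OF that(1) e1] ab0 by simp
    have l2: "B - j < d0 \<or> (B - j = d0 \<and> A - k \<le> c0)" using y0(3)[rule_format, OF that(2) e2] cd0 by simp
    show ?thesis using l1 l2 that(3,4) unfolding A_def B_def by linarith
  qed
  have "coeff (coeff (p*q) B) A = coeff (coeff p b0) a0 * coeff (coeff q (B - b0)) (A - a0)"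
    unfolding coeff_coeff_mult
  proof (rule double_sum_single)
    show "\<forall>j\<le>B. \<forall>k\<le>A. (j, k) \<noteq> (b0, a0) \<longrightarrow>
      coeff (coeff p j) k * coeff (coeff q (B - j)) (A - k) = 0"
      using key by (auto simp: supp_iff)
  qed (auto simp: A_def B_def)
  also have "\<dots> \<noteq> 0" using x0(1) y0(1) ab0 cd0 by (simp add: supp_iff A_def B_def)
  finally have "(A,B) \<in> supp (p*q)" by (simp add: supp_iff)
  then show ?thesis using x0 y0 ab0 cd0 unfolding A_def B_def
    by (intro bexI[OF _ x0(1)] bexI[OF _ y0(1)]) auto
qed


theorem lemma5p3:
  fixes f g :: "'a::{field,finite} poly poly"
  assumes "degree f \<ge> 1"
    and "g \<noteq> 0" and "g dvd f"
    and "i < degree f"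
    and "coeff (f * pderiv g div g) i \<noteq> 0"
  shows "B_set f i \<noteq> {} \<and> degree (coeff (f * pderiv g div g) i) \<le> Sup (B_set f i)"
proof -
  obtain h where fgh: "f = g * h" using assms(3) by (auto simp: dvd_def)
  have f0: "f \<noteq> 0" using assms(1) by auto
  then have h0: "h \<noteq> 0" using fgh by auto
  have "f * pderiv g = g * (h * pderiv g)" using fgh by (simp add: algebra_simps)
  then have eqd: "f * pderiv g div g = h * pderiv g" using assms(2)
    by (metis nonzero_mult_div_cancel_left)
  define c where "c = coeff (h * pderiv g) i"
  define m where "m = degree c"
  have c0: "c \<noteq> 0" using assms(5) eqd by (simp add: c_def)
  then have "(m, i) \<in> supp (h * pderiv g)" by (simp add: supp_iff m_def c_def[symmetric])
  then obtain a1 b1 a2 b2 where s1: "(a1,b1) \<in> supp h" and s2': "(a2,b2) \<in> supp (pderiv g)"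
    and mi: "m = a1 + a2" "i = b1 + b2"
    using supp_mult_split by blast
  have s2: "(a2, Suc b2) \<in> supp g" using supp_pderiv[OF s2'] .
  define P where "P = {(real a, real b) | a b. coeff (coeff f b) a \<noteq> 0}"
  have NP: "newton_polygon f = convex hull P" by (simp add: newton_polygon_def P_def)
  have "P = (\<lambda>x. (real (fst x), real (snd x))) ` supp f"
    by (auto simp: P_def supp_def image_def)
  then have Pf: "finite P" using finite_supp[of f] by (metis finite_imageI)
  then have cpt: "compact (convex hull P)" by (simp add: compact_convex_hull finite_imp_compact)
  define z where "z = (real m, real i + 1)"
  have zin: "z \<in> convex hull P"
  proof (rule ccontr)
    assume "z \<notin> convex hull P"
    then obtain a b where ab: "inner a z < b" "\<forall>x\<in>convex hull P. inner a x > b"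
      using separating_hyperplane_closed_point[of "convex hull P" z] cpt
      by (auto simp: convex_convex_hull compact_imp_closed)
    define w where "w = - a"
    obtain x0 y0 where x0: "x0 \<in> supp g" "\<forall>x'\<in>supp g. W w x' \<le> W w x0"
      and y0: "y0 \<in> supp h" "\<forall>y'\<in>supp h. W w y' \<le> W w y0"
      and xy: "(fst x0 + fst y0, snd x0 + snd y0) \<in> supp f"
      using supp_mult_max[OF assms(2) h0, of w] fgh by blast
    have "(real (fst x0 + fst y0), real (snd x0 + snd y0)) \<in> P"
      using xy unfolding P_def supp_def by (simp del: of_nat_add)
    then have "inner a (real (fst x0 + fst y0), real (snd x0 + snd y0)) > b"
      using ab(2) hull_subset[of P convex] by blast
    then have i1: "W w (fst x0 + fst y0, snd x0 + snd y0) < W w (m, Suc i)"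
      using ab(1) by (simp add: W_def w_def z_def inner_prod_def algebra_simps)
    have "W w (m, Suc i) = W w (a2, Suc b2) + W w (a1, b1)"
      using mi by (simp add: W_def algebra_simps)
    also have "\<dots> \<le> W w x0 + W w y0" using x0(2) y0(2) s1 s2 by (meson add_mono)
    also have "\<dots> = W w (fst x0 + fst y0, snd x0 + snd y0)"
      by (simp add: W_def algebra_simps)
    finally show False using i1 by simp
  qed
  have mB: "m \<in> B_set f i"
    unfolding B_set_def minkowski_sum_def NP
    using zin by (auto simp: z_def intro!: exI[of _ "real i + 1"])
  have "bounded (convex hull P)" using cpt compact_imp_bounded by blast
  then obtain K where K: "\<forall>x\<in>convex hull P. norm x \<le> K" by (auto simp: bounded_iff)
  have bdd: "bdd_above (B_set f i)"
  proof (rule bdd_aboveI)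
    fix m' assume "m' \<in> B_set f i"
    then obtain s where s: "s \<in> convex hull P" "(real m', real i) = s + (0, -1)"
      unfolding B_set_def minkowski_sum_def NP by auto
    then have "s = (real m', real i + 1)" by (cases s) auto
    then have "real m' \<le> K" using K s(1) norm_fst_le[of "real m'" "real i + 1"] by force
    then show "m' \<le> nat \<lceil>K\<rceil>" by linarith
  qed
  show ?thesis using mB bdd eqd cSup_upper[OF mB bdd] by (auto simp: m_def c_def)
qed

end
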